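(* Let $\mathsf V$ be a quantale, $X=(X,a)$ a $\mathsf V$-category, and let $\varphi:E\rightharpoonup X$, $\psi:X\rightharpoonup E$ be $\mathsf V$-modules with $\varphi\dashv\psi$. Then $\psi^*=\psi\cdot\mathrm y_X^*$ and $\psi_*=(\mathrm y_X)_*\cdot\varphi$; explicitly, for every $h\in[X^{\mathrm{op}},\mathsf V]$, $[h,\psi]=\bigvee_{x\in X}[h,x^*]\otimes\psi(x)$ and $[\psi,h]=\bigvee_{x\in X}\varphi(x)\otimes[x^*,h]$.
   Context: A quantale $(\mathsf V,\otimes,k)$ is a complete anti-symmetric lattice with an associative, commutative operation $\otimes$ with neutral element $k$ distributing over arbitrary suprema; $\hom(u,-)$ is the right adjoint of $u\otimes-$. A $\mathsf V$-category $(X,a)$ is a set with $a:X\times X\to\mathsf V$ such that $k\le a(x,x)$ and $a(x,y)\otimes a(y,z)\le a(x,z)$. A $\mathsf V$-module $\varphi:(X,a)\rightharpoonup(Y,b)$ is a map $X\times Y\to\mathsf V$ with $a(x,x')\otimes\varphi(x',y)\le\varphi(x,y)$ and $\varphi(x,y)\otimes b(y,y')\le\varphi(x,y')$; composition $(\psi\cdot\varphi)(x,z)=\bigvee_y\varphi(x,y)\otimes\psi(y,z)$; $\varphi\dashv\psi$ means $a\le\psi\cdot\varphi$ and $\varphi\cdot\psi\le b$. $E=(\{\star\},k)$; modules $E\rightharpoonup X$ and $X\rightharpoonup E$ are identified with maps $X\to\mathsf V$. $[X^{\mathrm{op}},\mathsf V]$ is the $\mathsf V$-category of modules $X\rightharpoonup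 E$ with $[h,h']=\bigwedge_x\hom(h(x),h'(x))$. For a $\mathsf V$-functor $f:(X,a)\to(Y,b)$, $f_*(x,y)=b(f(x),y)$ and $f^*(y,x)=b(y,f(x))$. $\mathrm y_X:X\to[X^{\mathrm{op}},\mathsf V]$, $x\mapsto x^*$ with $x^*(y)=a(y,x)$, is the Yoneda embedding. An element $\psi\in[X^{\mathrm{op}},\mathsf V]$ is regarded as a $\mathsf V$-functor $E\to[X^{\mathrm{op}},\mathsf V]$, giving $\psi_*:E\rightharpoonup[X^{\mathrm{op}},\mathsf V]$, $h\mapsto[\psi,h]$, and $\psi^*:[X^{\mathrm{op}},\mathsf V]\rightharpoonup E$, $h\mapsto[h,\psi]$. *)

theory Defs
  imports Main
begin

definition quantale :: "('v::complete_lattice \<Rightarrow> 'v \<Rightarrow> 'v) \<Rightarrow> 'v \<Rightarrow> bool" where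
  "quantale tensor k \<longleftrightarrow>
     (\<forall>u v w. tensor (tensor u v) w = tensor u (tensor v w)) \<and>
     (\<forall>u v. tensor u v = tensor v u) \<and>
     (\<forall>u. tensor k u = u) \<and>
     (\<forall>u A. tensor u (Sup A) = Sup (tensor u ` A))"

definition qhom :: "('v::complete_lattice \<Rightarrow> 'v \<Rightarrow> 'v) \<Rightarrow> 'v \<Rightarrow> 'v \<Rightarrow> 'v" where
  "qhom tensor u v = Sup {w. tensor u w \<le> v}"

definition vcat :: "('v::complete_lattice \<Rightarrow> 'v \<Rightarrow> 'v) \<Rightarrow> 'v \<Rightarrow> 'x set \<Rightarrow> ('x \<Rightarrow> 'x \<Rightarrow> 'v) \<Rightarrow> bool" where
  "vcat tensor k X a \<longleftrightarrow>
     (\<forall>x\<in>X. k \<le> a x x) \<and>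
     (\<forall>x\<in>X. \<forall>y\<in>X. \<forall>z\<in>X. tensor (a x y) (a y z) \<le> a x z)"

text \<open>A V-module E \<rightharpoonup> X, identified with a map X \<rightarrow> V
  (the condition e(*,*) \<otimes> phi(x) \<le> phi(x) with e(*,*) = k is automatic).\<close>
definition module_from_E :: "('v::complete_lattice \<Rightarrow> 'v \<Rightarrow> 'v) \<Rightarrow> 'x set \<Rightarrow> ('x \<Rightarrow> 'x \<Rightarrow> 'v) \<Rightarrow> ('x \<Rightarrow> 'v) \<Rightarrow> bool" where
  "module_from_E tensor X a phi \<longleftrightarrow>
     (\<forall>x\<in>X. \<forall>x'\<in>X. tensor (phi x) (a x x') \<le> phi x')"

text \<open>A V-module X \<rightharpoonup> E, identified with a map X \<rightarrow> V; these are the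
  elements of [X^op, V].\<close>
definition module_to_E :: "('v::complete_lattice \<Rightarrow> 'v \<Rightarrow> 'v) \<Rightarrow> 'x set \<Rightarrow> ('x \<Rightarrow> 'x \<Rightarrow> 'v) \<Rightarrow> ('x \<Rightarrow> 'v) \<Rightarrow> bool" where
  "module_to_E tensor X a psi \<longleftrightarrow>
     (\<forall>x\<in>X. \<forall>x'\<in>X. tensor (a x x') (psi x') \<le> psi x)"

text \<open>phi \<turnstile> psi for phi : E \<rightharpoonup> X, psi : X \<rightharpoonup> E:
  e \<le> psi \<cdot> phi and phi \<cdot> psi \<le> a (compositions written out).\<close>
definition module_adjoint :: "('v::complete_lattice \<Rightarrow> 'v \<Rightarrow> 'v) \<Rightarrow> 'v \<Rightarrow> 'x set \<Rightarrow> ('x \<Rightarrow> 'x \<Rightarrow> 'v) \<Rightarrow> ('x \<Rightarrow> 'v) \<Rightarrow> ('x \<Rightarrow> 'v) \<Rightarrow> bool" where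
  "module_adjoint tensor k X a phi psi \<longleftrightarrow>
     k \<le> (SUP x\<in>X. tensor (phi x) (psi x)) \<and>
     (\<forall>x\<in>X. \<forall>x'\<in>X. tensor (psi x) (phi x') \<le> a x x')"

definition presheaf_hom :: "('v::complete_lattice \<Rightarrow> 'v \<Rightarrow> 'v) \<Rightarrow> 'x set \<Rightarrow> ('x \<Rightarrow> 'v) \<Rightarrow> ('x \<Rightarrow> 'v) \<Rightarrow> 'v" where
  "presheaf_hom tensor X h h' = (INF x\<in>X. qhom tensor (h x) (h' x))"

definition yoneda :: "('x \<Rightarrow> 'x \<Rightarrow> 'v) \<Rightarrow> 'x \<Rightarrow> ('x \<Rightarrow> 'v)" where
  "yoneda a x = (\<lambda>y. a y x)"

end

theory Submission
  imports Defs
begin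

lemma q_assoc: "quantale t k \<Longrightarrow> t (t u v) w = t u (t v w)" unfolding quantale_def by blast
lemma q_comm: "quantale t k \<Longrightarrow> t u v = t v u" by (simp add: quantale_def)
lemma q_unit: "quantale t k \<Longrightarrow> t k u = u" by (simp add: quantale_def)
lemma q_sup: "quantale t k \<Longrightarrow> t u (Sup A) = Sup (t u ` A)" by (simp add: quantale_def)

lemma q_mono: assumes "quantale t k" "v \<le> w" shows "t u v \<le> t u w"
proof -
  have e: "Sup {v, w} = w" using assms(2) by (simp add: sup_absorb2)
  have "t u (Sup {v, w}) = Sup (t u ` {v, w})" by (rule q_sup[OF assms(1)])
  hence "t u w = Sup (t u ` {v, w})" by (simp only: e)
  moreover have "t u v \<le> Sup (t u ` {v, w})" by (rule Sup_upper) blast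
  ultimately show ?thesis by simp
qed

lemma q_mono2: assumes Q: "quantale t k" and "u \<le> u'" "v \<le> v'" shows "t u v \<le> t u' v'"
proof -
  have "t u v \<le> t u v'" using q_mono[OF Q assms(3)] .
  also have "\<dots> = t v' u" by (rule q_comm[OF Q])
  also have "\<dots> \<le> t v' u'" using q_mono[OF Q assms(2)] .
  also have "\<dots> = t u' v'" by (rule q_comm[OF Q])
  finally show ?thesis .
qed

lemma q_adj: assumes "quantale t k" shows "t u w \<le> v \<longleftrightarrow> w \<le> qhom t u v"
proof
  assume "t u w \<le> v" thus "w \<le> qhom t u v" unfolding qhom_def by (simp add: Sup_upper)
next
  assume "w \<le> qhom t u v"
  hence "t u w \<le> t u (qhom t u v)" using q_mono[OF assms] by blast
  also have "\<dots> = Sup (t u ` {w. t u w \<le> v})" unfolding qhom_def using q_sup[OF assms] by blast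
  also have "\<dots> \<le> v" by (auto intro: Sup_least)
  finally show "t u w \<le> v" .
qed

lemma ph_le: assumes "quantale t k" shows "w \<le> presheaf_hom t X h h' \<longleftrightarrow> (\<forall>y\<in>X. t (h y) w \<le> h' y)"
  unfolding presheaf_hom_def using q_adj[OF assms] by (simp add: le_INF_iff)

lemma q_supl: "quantale t k \<Longrightarrow> t (SUP x\<in>X. f x) u = (SUP x\<in>X. t (f x) u)"
proof -
  assume Q: "quantale t k"
  have "t (SUP x\<in>X. f x) u = t u (SUP x\<in>X. f x)" using q_comm[OF Q] .
  also have "\<dots> = (SUP x\<in>X. t u (f x))" using q_sup[OF Q] by (simp add: image_image)
  also have "\<dots> = (SUP x\<in>X. t (f x) u)" using q_comm[OF Q] by simp
  finally show ?thesis .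
qed

theorem lemma1p6:
  fixes tensor :: "'v::complete_lattice \<Rightarrow> 'v \<Rightarrow> 'v" and k :: 'v
    and X :: "'x set" and a :: "'x \<Rightarrow> 'x \<Rightarrow> 'v"
    and phi psi :: "'x \<Rightarrow> 'v"
  assumes "quantale tensor k"
    and "vcat tensor k X a"
    and "module_from_E tensor X a phi"
    and "module_to_E tensor X a psi"
    and "module_adjoint tensor k X a phi psi"
  shows "\<forall>h. module_to_E tensor X a h \<longrightarrow>
           presheaf_hom tensor X h psi
             = (SUP x\<in>X. tensor (presheaf_hom tensor X h (yoneda a x)) (psi x))
         \<and> presheaf_hom tensor X psi h
             = (SUP x\<in>X. tensor (phi x) (presheaf_hom tensor X (yoneda a x) h))"
proof (intro allI impI conjI)
  note Q = assms(1)
  note A = q_assoc[OF Q] note C = q_comm[OF Q]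
  have psiM: "\<And>x y. x\<in>X \<Longrightarrow> y\<in>X \<Longrightarrow> tensor (a y x) (psi x) \<le> psi y"
    using assms(4) unfolding module_to_E_def by blast
  have adjK: "k \<le> (SUP x\<in>X. tensor (phi x) (psi x))" using assms(5) unfolding module_adjoint_def by blast
  have adjC: "\<And>x y. x\<in>X \<Longrightarrow> y\<in>X \<Longrightarrow> tensor (psi y) (phi x) \<le> a y x"
    using assms(5) unfolding module_adjoint_def by blast
  have ev: "\<And>y h h'. y\<in>X \<Longrightarrow> tensor (h y) (presheaf_hom tensor X h h') \<le> h' y"
  proof -
    fix y h h' assume y: "y\<in>X"
    have "presheaf_hom tensor X h h' \<le> presheaf_hom tensor X h h'" by (rule order_refl)
    hence "\<forall>y\<in>X. tensor (h y) (presheaf_hom tensor X h h') \<le> h' y" by (simp only: ph_le[OF Q])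
    thus "tensor (h y) (presheaf_hom tensor X h h') \<le> h' y" using y by blast
  qed
  have bound: "\<And>w. w \<le> (SUP x\<in>X. tensor (phi x) (tensor (psi x) w))"
  proof -
    fix w
    have "w = tensor k w" using q_unit[OF Q] by simp
    also have "\<dots> \<le> tensor (SUP x\<in>X. tensor (phi x) (psi x)) w" using q_mono2[OF Q adjK] by simp
    also have "\<dots> = (SUP x\<in>X. tensor (phi x) (tensor (psi x) w))" by (simp only: q_supl[OF Q] A)
    finally show "w \<le> (SUP x\<in>X. tensor (phi x) (tensor (psi x) w))" .
  qed
  fix h assume hM: "module_to_E tensor X a h"
  have hM': "\<And>x y. x\<in>X \<Longrightarrow> y\<in>X \<Longrightarrow> tensor (a y x) (h x) \<le> h y"
    using hM unfolding module_to_E_def by blast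
  show "presheaf_hom tensor X h psi
             = (SUP x\<in>X. tensor (presheaf_hom tensor X h (yoneda a x)) (psi x))"
  proof (rule antisym)
    let ?L = "presheaf_hom tensor X h psi"
    have "\<And>x. x\<in>X \<Longrightarrow> tensor (phi x) (tensor (psi x) ?L) \<le> tensor (presheaf_hom tensor X h (yoneda a x)) (psi x)"
    proof -
      fix x assume x: "x\<in>X"
      have "tensor (phi x) ?L \<le> presheaf_hom tensor X h (yoneda a x)"
        unfolding ph_le[OF Q] yoneda_def
      proof
        fix y assume y: "y\<in>X"
        have "tensor (h y) (tensor (phi x) ?L) = tensor (tensor (h y) ?L) (phi x)" by (subst C[of "phi x"], subst A, rule refl)
        also have "\<dots> \<le> tensor (psi y) (phi x)" using q_mono2[OF Q ev[OF y] order_refl] .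
        also have "\<dots> \<le> a y x" using adjC x y .
        finally show "tensor (h y) (tensor (phi x) ?L) \<le> a y x" .
      qed
      hence "tensor (tensor (phi x) ?L) (psi x) \<le> tensor (presheaf_hom tensor X h (yoneda a x)) (psi x)"
        using q_mono2[OF Q _ order_refl] by blast
      moreover have "tensor (tensor (phi x) ?L) (psi x) = tensor (phi x) (tensor (psi x) ?L)"
        by (subst A, subst C[of ?L], rule refl)
      ultimately show "?thesis x" by simp
    qed
    thus "?L \<le> (SUP x\<in>X. tensor (presheaf_hom tensor X h (yoneda a x)) (psi x))"
      by (rule order_trans[OF bound[of ?L] SUP_subset_mono[OF order_refl]])
  next
    show "(SUP x\<in>X. tensor (presheaf_hom tensor X h (yoneda a x)) (psi x)) \<le> presheaf_hom tensor X h psi"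
    proof (rule SUP_least)
      fix x assume x: "x\<in>X"
      show "tensor (presheaf_hom tensor X h (yoneda a x)) (psi x) \<le> presheaf_hom tensor X h psi"
        unfolding ph_le[OF Q]
      proof
        fix y assume y: "y\<in>X"
        have "tensor (h y) (tensor (presheaf_hom tensor X h (yoneda a x)) (psi x))
             = tensor (tensor (h y) (presheaf_hom tensor X h (yoneda a x))) (psi x)" by (simp only: A)
        also have "\<dots> \<le> tensor (a y x) (psi x)"
          using q_mono2[OF Q ev[OF y, of h "yoneda a x"] order_refl] by (simp add: yoneda_def)
        also have "\<dots> \<le> psi y" using psiM x y .
        finally show "tensor (h y) (tensor (presheaf_hom tensor X h (yoneda a x)) (psi x)) \<le> psi y" .
      qed
    qed
  qed
  show "presheaf_hom tensor X psi h
             = (SUP x\<in>X. tensor (phi x) (presheaf_hom tensor X (yoneda a x) h))"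
  proof (rule antisym)
    let ?L = "presheaf_hom tensor X psi h"
    have "\<And>x. x\<in>X \<Longrightarrow> tensor (phi x) (tensor (psi x) ?L) \<le> tensor (phi x) (presheaf_hom tensor X (yoneda a x) h)"
    proof -
      fix x assume x: "x\<in>X"
      have "tensor (psi x) ?L \<le> presheaf_hom tensor X (yoneda a x) h"
        unfolding ph_le[OF Q] yoneda_def
      proof
        fix y assume y: "y\<in>X"
        have "tensor (a y x) (tensor (psi x) ?L) = tensor (tensor (a y x) (psi x)) ?L" by (simp only: A)
        also have "\<dots> \<le> tensor (psi y) ?L" using q_mono2[OF Q psiM[OF x y] order_refl] .
        also have "\<dots> \<le> h y" using ev[OF y] .
        finally show "tensor (a y x) (tensor (psi x) ?L) \<le> h y" .
      qed
      thus "?thesis x" using q_mono[OF Q] by blast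
    qed
    thus "?L \<le> (SUP x\<in>X. tensor (phi x) (presheaf_hom tensor X (yoneda a x) h))"
      by (rule order_trans[OF bound[of ?L] SUP_subset_mono[OF order_refl]])
  next
    show "(SUP x\<in>X. tensor (phi x) (presheaf_hom tensor X (yoneda a x) h)) \<le> presheaf_hom tensor X psi h"
    proof (rule SUP_least)
      fix x assume x: "x\<in>X"
      show "tensor (phi x) (presheaf_hom tensor X (yoneda a x) h) \<le> presheaf_hom tensor X psi h"
        unfolding ph_le[OF Q]
      proof
        fix y assume y: "y\<in>X"
        have "tensor (psi y) (tensor (phi x) (presheaf_hom tensor X (yoneda a x) h))
             = tensor (tensor (psi y) (phi x)) (presheaf_hom tensor X (yoneda a x) h)" by (simp only: A)
        also have "\<dots> \<le> tensor (a y x) (presheaf_hom tensor X (yoneda a x) h)"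
          using q_mono2[OF Q adjC[OF x y] order_refl] .
        also have "\<dots> \<le> h y" using ev[OF y, of "yoneda a x" h] by (simp add: yoneda_def)
        finally show "tensor (psi y) (tensor (phi x) (presheaf_hom tensor X (yoneda a x) h)) \<le> h y" .
      qed
    qed
  qed
qed

end
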